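(* For $n\ge1$ and $0\le k<n$, $$|\mathbf{I}_{n,k}(110)|=|\mathbf{I}_{n-1}(110)|-\sum_{j=k+1}^{n-3}|\mathbf{I}_{n-2,j}(110)|.$$
   Context: An inversion sequence of length $n$ is an integer sequence $e=e_1\dots e_n$ with $0\le e_i<i$ for all $i$; $\mathbf{I}_n$ denotes the set of these. The reduction of an integer word replaces every occurrence of its $i$-th smallest distinct value by $i-1$. $e$ contains the consecutive pattern $p$ of length $m$ if some $e_i\dots e_{i+m-1}$ has reduction $p$, and avoids it otherwise; $\mathbf{I}_n(p)$ is the set of $e\in\mathbf{I}_n$ avoiding $p$ (so avoiding $110$ means no $i$ with $e_i=e_{i+1}>e_{i+2}$). $\mathbf{I}_{n,k}(p)=\{e\in\mathbf{I}_n(p):e_n=k\}$, which is empty for $k\ge n$. Conventions: $|\mathbf{I}_0(p)|=1$ and $|\mathbf{I}_{n,j}(p)|=0$ whenever $n\le 0$ (as $j\ge n$) or $n<0$; empty sums are $0$. *)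

theory Defs
  imports Main
begin

(* Inversion sequences of length n, as lists e with e ! i = e_{i+1}; condition 0 <= e_{i+1} < i+1 *)
definition inv_seqs :: "nat \<Rightarrow> nat list set" where
  "inv_seqs n = {e. length e = n \<and> (\<forall>i<n. e ! i < i + 1)}"

definition reduction :: "nat list \<Rightarrow> nat list" where
  "reduction w = map (\<lambda>x. card {y \<in> set w. y < x}) w"

definition contains_pat :: "nat list \<Rightarrow> nat list \<Rightarrow> bool" where
  "contains_pat p e \<longleftrightarrow>
     (\<exists>i. i + length p \<le> length e \<and> reduction (take (length p) (drop i e)) = p)"

definition avoid_seqs :: "nat list \<Rightarrow> nat \<Rightarrow> nat list set" where
  "avoid_seqs p n = {e \<in> inv_seqs n. \<not> contains_pat p e}"

(* |I_n(p)| with conventions: 1 for n = 0 (the empty sequence), 0 for n < 0 *)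
definition cntI :: "nat list \<Rightarrow> int \<Rightarrow> int" where
  "cntI p n = (if n < 0 then 0 else int (card (avoid_seqs p (nat n))))"

definition cntIk :: "nat list \<Rightarrow> int \<Rightarrow> int \<Rightarrow> int" where
  "cntIk p n k = (if n \<le> 0 then 0
     else int (card {e \<in> avoid_seqs p (nat n). int (last e) = k}))"

end

theory Submission imports Defs begin

lemma red3: "reduction [a,b,c] = [1,1,0] \<longleftrightarrow> (a = b \<and> c < b)"
proof
  assume h: "reduction [a,b,c] = [1,1,0]"
  then have h1: "card {y \<in> {a,b,c}. y < a} = 1" and h2: "card {y \<in> {a,b,c}. y < b} = 1"
     and h3: "card {y \<in> {a,b,c}. y < c} = 0" by (auto simp: reduction_def)
  have "c \<le> a" "c \<le> b" using h3 by (auto simp: card_eq_0_iff)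
  show "a = b \<and> c < b"
  proof (cases "a = b")
    case True
    show ?thesis
    proof (cases "c = b")
      case True
      then have "{y \<in> {a,b,c}. y < a} = {}" using \<open>a = b\<close> by auto
      then show ?thesis using h1 by (metis card.empty zero_neq_one)
    next
      case False
      then show ?thesis using \<open>c \<le> b\<close> \<open>a = b\<close> by auto
    qed
  next
    case False
    show ?thesis
    proof (cases "a < b")
      case True
      then have e: "{y \<in> {a,b,c}. y < b} = {a,c}" using \<open>c \<le> a\<close> by auto
      have "c = a"
      proof (rule ccontr)
        assume "c \<noteq> a" then have "card {a,c} = 2" by simp
        then show False using h2 e by (metis numeral_One numeral_eq_iff semiring_norm(85))
      qed
      then have "{y \<in> {a,b,c}. y < a} = {}" using True by auto
      then show ?thesis using h1 by (metis card.empty zero_neq_one)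
    next
      case False
      then have lt: "b < a" using \<open>a \<noteq> b\<close> by auto
      then have e: "{y \<in> {a,b,c}. y < a} = {b,c}" using \<open>c \<le> b\<close> by auto
      have "c = b"
      proof (rule ccontr)
        assume "c \<noteq> b" then have "card {b,c} = 2" by simp
        then show False using h1 e by (metis numeral_One numeral_eq_iff semiring_norm(85))
      qed
      then have "{y \<in> {a,b,c}. y < b} = {}" using lt by auto
      then show ?thesis using h2 by (metis card.empty zero_neq_one)
    qed
  qed
next
  assume "a = b \<and> c < b"
  then have "{y \<in> {b,c}. y < b} = {c}" "{y \<in> {b,c}. y < c} = {}" by auto
  then show "reduction [a,b,c] = [1,1,0]" using \<open>a = b \<and> c < b\<close> by (simp add: reduction_def)
qed

definition has110 :: "nat list \<Rightarrow> bool" where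
  "has110 e \<longleftrightarrow> (\<exists>i. Suc (Suc i) < length e \<and> e!i = e!Suc i \<and> e!Suc(Suc i) < e!Suc i)"

lemma contains110: "contains_pat [1,1,0] e \<longleftrightarrow> has110 e"
proof -
  have t: "i + 3 \<le> length e \<Longrightarrow> take 3 (drop i e) = [e!i, e!Suc i, e!Suc(Suc i)]" for i
    by (simp add: take_Suc_conv_app_nth numeral_3_eq_3 add.commute)
  show ?thesis unfolding contains_pat_def has110_def
  proof
    assume "\<exists>i. i + length [1::nat,1,0] \<le> length e \<and> reduction (take (length [1::nat,1,0]) (drop i e)) = [1,1,0]"
    moreover have l3: "length [1::nat,1,0] = 3" by simp
    ultimately obtain i where i: "i + 3 \<le> length e" "reduction (take 3 (drop i e)) = [1,1,0]" unfolding l3 by blast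
    then have "reduction [e!i, e!Suc i, e!Suc(Suc i)] = [1,1,0]" using t by metis
    then show "\<exists>i. Suc (Suc i) < length e \<and> e!i = e!Suc i \<and> e!Suc(Suc i) < e!Suc i"
      using i(1) unfolding red3 by (intro exI[of _ i]) auto
  next
    assume "\<exists>i. Suc (Suc i) < length e \<and> e!i = e!Suc i \<and> e!Suc(Suc i) < e!Suc i"
    then obtain i where i: "Suc (Suc i) < length e" "e!i = e!Suc i" "e!Suc(Suc i) < e!Suc i" by auto
    then have "i + 3 \<le> length e" by simp
    moreover have "reduction [e!i, e!Suc i, e!Suc(Suc i)] = [1,1,0]" using i red3 by simp
    moreover have l3: "length [1::nat,1,0] = 3" by simp
    ultimately show "\<exists>i. i + length [1::nat,1,0] \<le> length e \<and> reduction (take (length [1::nat,1,0]) (drop i e)) = [1,1,0]"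
      unfolding l3 using t by (intro exI[of _ i]) metis
  qed
qed

lemma has110_snoc:
  assumes len: "length e = m"
  shows "has110 (e @ [x]) \<longleftrightarrow> has110 e \<or> (2 \<le> m \<and> e!(m-2) = e!(m-1) \<and> x < e!(m-1))"
proof
  assume "has110 (e @ [x])"
  then obtain i where i: "Suc (Suc i) < length (e @ [x])" "(e @ [x]) ! i = (e @ [x]) ! Suc i"
    "(e @ [x]) ! Suc (Suc i) < (e @ [x]) ! Suc i" unfolding has110_def by blast
  show "has110 e \<or> (2 \<le> m \<and> e!(m-2) = e!(m-1) \<and> x < e!(m-1))"
  proof (cases "Suc (Suc i) < m")
    case True
    then have "has110 e" using len i unfolding has110_def
      by (intro exI[of _ i]) (auto simp: nth_append)
    then show ?thesis by simp
  next
    case False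
    then have im: "i = m - 2" "2 \<le> m" "Suc i = m - 1" "Suc (Suc i) = m" using len i(1) by auto
    then have "e!(m-2) = e!(m-1)" "x < e!(m-1)" using len i(2,3)
      by (auto simp: nth_append)
    then show ?thesis using im by auto
  qed
next
  assume "has110 e \<or> (2 \<le> m \<and> e!(m-2) = e!(m-1) \<and> x < e!(m-1))"
  then show "has110 (e @ [x])"
  proof
    assume "has110 e"
    then obtain i where "Suc (Suc i) < length e" "e ! i = e ! Suc i" "e ! Suc (Suc i) < e ! Suc i"
      unfolding has110_def by blast
    then show ?thesis unfolding has110_def by (intro exI[of _ i]) (auto simp: nth_append)
  next
    assume h: "2 \<le> m \<and> e!(m-2) = e!(m-1) \<and> x < e!(m-1)"
    then have im: "Suc (m-2) = m - 1" "Suc (Suc (m-2)) = m" by auto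
    show ?thesis unfolding has110_def using h len
      by (intro exI[of _ "m-2"]) (simp add: nth_append im)
  qed
qed

lemma inv_snoc: "e @ [x] \<in> inv_seqs (Suc m) \<longleftrightarrow> e \<in> inv_seqs m \<and> x \<le> m"
proof
  assume h: "e @ [x] \<in> inv_seqs (Suc m)"
  then have l: "length e = m" by (simp add: inv_seqs_def)
  have A: "\<forall>i<m. e ! i < i + 1"
  proof (intro allI impI)
    fix i assume "i < m"
    then have "(e @ [x]) ! i < i + 1" using h by (simp add: inv_seqs_def)
    then show "e ! i < i + 1" using \<open>i < m\<close> l by (simp add: nth_append)
  qed
  have "(e @ [x]) ! length e < length e + 1" using h l by (simp add: inv_seqs_def)
  then have "x \<le> m" using l by (metis nth_append_length less_Suc_eq_le Suc_eq_plus1)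
  then show "e \<in> inv_seqs m \<and> x \<le> m" using l A by (simp add: inv_seqs_def)
next
  assume h: "e \<in> inv_seqs m \<and> x \<le> m"
  then have l: "length e = m" by (simp add: inv_seqs_def)
  have "\<forall>i<Suc m. (e @ [x]) ! i < i + 1"
  proof (intro allI impI)
    fix i assume "i < Suc m"
    then show "(e @ [x]) ! i < i + 1" using h l by (cases "i < m") (auto simp: nth_append inv_seqs_def)
  qed
  then show "e @ [x] \<in> inv_seqs (Suc m)" using l by (simp add: inv_seqs_def)
qed

lemma finite_inv: "finite (inv_seqs n)"
proof -
  have "inv_seqs n \<subseteq> {xs. set xs \<subseteq> {..<n} \<and> length xs = n}"
  proof
    fix e assume e: "e \<in> inv_seqs n"
    have "set e \<subseteq> {..<n}"
    proof
      fix y assume "y \<in> set e"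
      then obtain i where "i < length e" "e ! i = y" by (auto simp: in_set_conv_nth)
      then show "y \<in> {..<n}" using e unfolding inv_seqs_def by fastforce
    qed
    then show "e \<in> {xs. set xs \<subseteq> {..<n} \<and> length xs = n}" using e by (simp add: inv_seqs_def)
  qed
  then show ?thesis using finite_lists_length_eq[of "{..<n}" n] finite_subset by blast
qed


lemma avoid_eq: "avoid_seqs [1,1,0] n = {e \<in> inv_seqs n. \<not> has110 e}"
  unfolding avoid_seqs_def contains110 by simp

lemma avoid_eq': "avoid_seqs [Suc 0, Suc 0, 0] n = {e \<in> inv_seqs n. \<not> has110 e}"
  using avoid_eq by simp

lemma finite_avoid: "finite (avoid_seqs [1,1,0] n)"
  using finite_inv unfolding avoid_seqs_def by simp

lemma inv_len: "e \<in> inv_seqs n \<Longrightarrow> length e = n"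
  by (simp add: inv_seqs_def)

lemma snoc_split: "e \<in> inv_seqs (Suc m) \<Longrightarrow> e = butlast e @ [last e]"
  by (metis append_butlast_last_id inv_len list.size(3) nat.distinct(1))

lemma count_nat:
  assumes "K \<le> m"
  shows "card {e \<in> avoid_seqs [1,1,0] (Suc m). last e = K}
     + (\<Sum>j\<in>{K+1..m-2}. card {e \<in> avoid_seqs [1,1,0] (m-1). last e = j})
     = card (avoid_seqs [1,1,0] m)"
proof -
  let ?P = "avoid_seqs [1,1,0]"
  define bad where "bad e \<longleftrightarrow> (2 \<le> m \<and> e!(m-2) = e!(m-1) \<and> K < e!(m-1))" for e :: "nat list"
  define B where "B = {e \<in> ?P m. \<not> bad e}"
  define D where "D = {e \<in> ?P m. bad e}"
  define C where "C j = {e \<in> ?P (m-1). last e = j}" for j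
  have mm: "m - 1 - 1 = m - 2" by simp
  have A_eq: "{e \<in> ?P (Suc m). last e = K} = (\<lambda>e. e @ [K]) ` B"
  proof
    show "{e \<in> ?P (Suc m). last e = K} \<subseteq> (\<lambda>e. e @ [K]) ` B"
    proof
      fix e assume e: "e \<in> {e \<in> ?P (Suc m). last e = K}"
      then have ei: "e \<in> inv_seqs (Suc m)" "\<not> has110 e" "last e = K" by (auto simp: avoid_eq avoid_eq')
      have es: "e = butlast e @ [K]" using snoc_split[OF ei(1)] ei(3) by simp
      have bi: "butlast e \<in> inv_seqs m" using ei(1) es inv_snoc by metis
      have bl: "length (butlast e) = m" using inv_len[OF bi] .
      have "\<not> has110 (butlast e @ [K])" using ei(2) es by simp
      then have "\<not> has110 (butlast e) \<and> \<not> bad (butlast e)"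
        unfolding bad_def has110_snoc[OF bl] by auto
      then have "butlast e \<in> B" using bi unfolding B_def avoid_eq avoid_eq' by simp
      then show "e \<in> (\<lambda>e. e @ [K]) ` B" using es by (metis image_eqI)
    qed
  next
    show "(\<lambda>e. e @ [K]) ` B \<subseteq> {e \<in> ?P (Suc m). last e = K}"
    proof
      fix e assume "e \<in> (\<lambda>e. e @ [K]) ` B"
      then obtain e' where e': "e' \<in> B" "e = e' @ [K]" by auto
      then have ei: "e' \<in> inv_seqs m" "\<not> has110 e'" "\<not> bad e'" by (auto simp: B_def avoid_eq avoid_eq')
      have bl: "length e' = m" using inv_len[OF ei(1)] .
      have "e' @ [K] \<in> inv_seqs (Suc m)" using ei(1) assms inv_snoc by blast
      moreover have "\<not> has110 (e' @ [K])" unfolding has110_snoc[OF bl] using ei(2,3) by (auto simp: bad_def)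
      ultimately show "e \<in> {e \<in> ?P (Suc m). last e = K}" using e'(2) by (simp add: avoid_eq avoid_eq')
    qed
  qed
  have cardA: "card {e \<in> ?P (Suc m). last e = K} = card B"
    unfolding A_eq by (rule card_image) (auto intro: inj_onI)
  have PBD: "?P m = B \<union> D" "B \<inter> D = {}" unfolding B_def D_def by auto
  have fB: "finite B" "finite D" unfolding B_def D_def using finite_avoid by auto
  have cardP: "card (?P m) = card B + card D"
    using PBD fB card_Un_disjoint by metis
  have D_eq: "D = (\<Union>j\<in>{K+1..m-2}. (\<lambda>e. e @ [j]) ` C j)"
  proof
    show "D \<subseteq> (\<Union>j\<in>{K+1..m-2}. (\<lambda>e. e @ [j]) ` C j)"
    proof
      fix e assume "e \<in> D"
      then have ei: "e \<in> inv_seqs m" "\<not> has110 e" "bad e" by (auto simp: D_def avoid_eq avoid_eq')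
      then have m2: "2 \<le> m" and b1: "e!(m-2) = e!(m-1)" and b2: "K < e!(m-1)" by (auto simp: bad_def)
      define j where "j = last e"
      have ms: "m = Suc (m-1)" using m2 by simp
      have ei': "e \<in> inv_seqs (Suc (m-1))" using ei(1) ms by simp
      have es: "e = butlast e @ [j]" using snoc_split[OF ei'] j_def by simp
      have bi: "butlast e \<in> inv_seqs (m-1)" "j \<le> m - 1" using ei' es inv_snoc by metis+
      have bl: "length (butlast e) = m - 1" using inv_len[OF bi(1)] .
      have le: "length e = m" using inv_len[OF ei(1)] .
      have ne: "e \<noteq> []" using le m2 by auto
      have jl: "j = e!(m-1)" unfolding j_def using le ne by (simp add: last_conv_nth)
      have bne: "butlast e \<noteq> []"
      proof
        assume "butlast e = []" then have "length (butlast e) = 0" by simp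
        then show False using bl m2 by linarith
      qed
      have "last (butlast e) = butlast e ! (m-2)" using bl bne last_conv_nth
        by (metis mm)
      also have "\<dots> = e ! (m-2)" using nth_butlast[of "m-2" e] bl m2 by simp
      finally have lb: "last (butlast e) = e!(m-2)" .
      have "butlast e ! (m-2) < m - 2 + 1" using bi(1) m2 unfolding inv_seqs_def by auto
      then have "e!(m-2) < m - 1" using m2 le by (simp add: nth_butlast)
      then have jr: "j \<in> {K+1..m-2}" using b1 b2 jl by auto
      have "\<not> has110 (butlast e)" using ei(2) es has110_snoc[OF bl] by metis
      then have "butlast e \<in> C j" using bi(1) lb b1 jl unfolding C_def avoid_eq avoid_eq' by simp
      then show "e \<in> (\<Union>j\<in>{K+1..m-2}. (\<lambda>e. e @ [j]) ` C j)" using jr es by blast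
    qed
  next
    show "(\<Union>j\<in>{K+1..m-2}. (\<lambda>e. e @ [j]) ` C j) \<subseteq> D"
    proof
      fix e assume "e \<in> (\<Union>j\<in>{K+1..m-2}. (\<lambda>e. e @ [j]) ` C j)"
      then obtain j e' where j: "j \<in> {K+1..m-2}" and e': "e' \<in> C j" "e = e' @ [j]" by auto
      then have ei: "e' \<in> inv_seqs (m-1)" "\<not> has110 e'" "last e' = j" by (auto simp: C_def avoid_eq avoid_eq')
      have m3: "3 \<le> m" using j by auto
      have bl: "length e' = m - 1" using inv_len[OF ei(1)] .
      have bne: "e' \<noteq> []"
      proof
        assume "e' = []" then have "length e' = 0" by simp
        then show False using bl m3 by linarith
      qed
      have lj: "e' ! (m-2) = j" using ei(3) bl bne last_conv_nth
        by (metis mm)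
      have ms: "m = Suc (m-1)" using m3 by simp
      have "e' @ [j] \<in> inv_seqs (Suc (m-1))" using ei(1) j inv_snoc by auto
      then have inv: "e \<in> inv_seqs m" using ms e'(2) by simp
      have nj: "\<not> (j < e'!(m-1-1))" using lj mm by simp
      have "\<not> has110 e" unfolding e'(2) has110_snoc[OF bl]
        using ei(2) nj by blast
      moreover have "bad e" unfolding bad_def e'(2) using m3 bl lj j
        by (auto simp: nth_append)
      ultimately show "e \<in> D" using inv unfolding D_def avoid_eq avoid_eq' by simp
    qed
  qed
  have fC: "finite (C j)" for j unfolding C_def using finite_avoid by simp
  have "card D = (\<Sum>j\<in>{K+1..m-2}. card ((\<lambda>e. e @ [j]) ` C j))"
    unfolding D_eq by (rule card_UN_disjoint) (auto simp: fC)
  also have "\<dots> = (\<Sum>j\<in>{K+1..m-2}. card (C j))"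
    by (rule sum.cong) (auto intro!: card_image inj_onI)
  finally show ?thesis using cardA cardP unfolding C_def by simp
qed


theorem mainTheorem10:
  fixes n k :: int
  assumes "n \<ge> 1" and "0 \<le> k" and "k < n"
  shows "cntIk [1,1,0] n k = cntI [1,1,0] (n - 1) - (\<Sum>j = k + 1..n - 3. cntIk [1,1,0] (n - 2) j)"
proof -
  define m where "m = nat (n - 1)"
  define K where "K = nat k"
  have nm: "n = int m + 1" and kK: "k = int K" and Km: "K \<le> m"
    using assms unfolding m_def K_def by auto
  have nat_n: "nat n = Suc m" using nm by simp
  have c1: "cntIk [1,1,0] n k = int (card {e \<in> avoid_seqs [1,1,0] (Suc m). last e = K})"
    unfolding cntIk_def using assms nat_n kK by simp
  have c2: "cntI [1,1,0] (n - 1) = int (card (avoid_seqs [1,1,0] m))"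
    unfolding cntI_def using nm by simp
  have c3: "(\<Sum>j = k + 1..n - 3. cntIk [1,1,0] (n - 2) j)
      = int (\<Sum>j\<in>{K+1..m-2}. card {e \<in> avoid_seqs [1,1,0] (m-1). last e = j})"
  proof (cases "n \<le> 2")
    case True
    then have "{k+1..n-3} = {}" using assms by auto
    moreover have "{K+1..m-2} = {}" using True nm by auto
    ultimately show ?thesis by simp
  next
    case False
    then have m2: "m \<ge> 2" using nm by simp
    have "{k+1..n-3} = int ` {K+1..m-2}"
      unfolding image_int_atLeastAtMost using m2 nm kK by simp
    then have "(\<Sum>j = k + 1..n - 3. cntIk [1,1,0] (n - 2) j)
        = (\<Sum>j\<in>{K+1..m-2}. cntIk [1,1,0] (n - 2) (int j))"
      by (simp add: sum.reindex)
    also have "\<dots> = (\<Sum>j\<in>{K+1..m-2}. int (card {e \<in> avoid_seqs [1,1,0] (m-1). last e = j}))"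
    proof (rule sum.cong)
      fix j assume "j \<in> {K+1..m-2}"
      have "nat (n - 2) = m - 1" using nm m2 by simp
      moreover have "\<not> n - 2 \<le> 0" using False by simp
      ultimately show "cntIk [1,1,0] (n - 2) (int j) = int (card {e \<in> avoid_seqs [1,1,0] (m-1). last e = j})"
        unfolding cntIk_def by simp
    qed simp
    also have "\<dots> = int (\<Sum>j\<in>{K+1..m-2}. card {e \<in> avoid_seqs [1,1,0] (m-1). last e = j})"
      by simp
    finally show ?thesis .
  qed
  show ?thesis unfolding c1 c2 c3 using count_nat[OF Km] by linarith
qed

end
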